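(* For $\nu>0$ small let $p_{x1}=p_{01}=p_{0x}=-2\cosh(2\pi\nu)$, let $\mu=\mu(\nu)$ be real, determined by $$\mu=-\frac12+\frac1{2\pi}\arg\Big(c_1(\nu)-\frac i2\sqrt{c_2(\nu)}\Big),\qquad -\pi\le\arg(\cdot)\le0,$$ and let $d=d(\nu)$ be the corresponding integration constant (branch with $d\to0$ as $\nu\to0$). Let $$y_1(x)=\frac{(2\mu-1+2i\nu)^2}{16\nu^2}e^{-2id}x^{-2i\nu}-\frac{(2\mu-1)^2-4\nu^2}{8\nu^2}+\frac{(2\mu-1-2i\nu)^2}{16\nu^2}e^{2id}x^{2i\nu}.$$ Then as $\nu\to0$, $\mu\to-\frac12$, and for every fixed $x\ne0$ (with $|\arg x|<\pi$) the limit $\lim_{\nu\to0}y_1(x)=P_1^{(-1/2)}(\ln x)$ exists, where $$P_1^{(-1/2)}(\ln x)=-(\ln x+d_1+2)(\ln x+d_1),\qquad d_1=\frac{i\pi}2-4\ln2-\frac{\pi\sqrt3}2.$$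
   Context: $c_1(\nu)=2+3\cosh(2\pi\nu)-\cosh(3\pi\nu)-3\cosh(\pi\nu)$, $c_2(\nu)=96\cosh(\pi\nu)+52\cosh(3\pi\nu)+12\cosh(5\pi\nu)-50-78\cosh(2\pi\nu)-30\cosh(4\pi\nu)-2\cosh(6\pi\nu)$ (nonnegative for small $\nu$, positive square root); this $\mu$ satisfies $\cos(2\pi\mu)=-c_1(\nu)$, i.e. the relation $3p_{0x}^2+p_{0x}^3-12p_{0x}(1+\cos 2\pi\mu)+4\cos^2 2\pi\mu+16\cos 2\pi\mu+8=0$. The integration constant is $$d=\frac i2\ln\Big\{-\frac{4\cdot16^{2i\nu}\Gamma(\frac32-\mu-i\nu)^2\Gamma(\mu+\frac12-i\nu)^2}{(2\nu+i(1-2\mu))^2\nu^2\sinh(2\pi\nu)^2\Gamma(-i\nu)^4}\Big[\tfrac12(e^{2\pi\nu}p_{x1}-p_{01})\sinh(2\pi\nu)+(\cos(2\pi\mu)+1)(e^{2\pi\nu}+1)\Big]\Big\}.$$ $y_1$ is the leading term of the branch $\frac1{y(x)}=\sum_{n\ge1}x^{n-1}\sum_{m=-n}^nA_{nm}(\nu,\mu)e^{2imd}x^{2im\nu}$ of the Painlevé VI equation $PVI_\mu$ (parameters $\alpha=(2\mu-1)^2/2$, $\beta=\gamma=0$, $\delta=1/2$) associated with these monodromy data; $x^{\pm2i\nu}=e^{\pm2i\nu\log x}$. *)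

theory Defs
  imports "HOL-Analysis.Analysis"
begin

definition c1 :: "real \<Rightarrow> real" where
  "c1 \<nu> = 2 + 3 * cosh (2*pi*\<nu>) - cosh (3*pi*\<nu>) - 3 * cosh (pi*\<nu>)"

definition c2 :: "real \<Rightarrow> real" where
  "c2 \<nu> = 96 * cosh (pi*\<nu>) + 52 * cosh (3*pi*\<nu>) + 12 * cosh (5*pi*\<nu>) - 50
           - 78 * cosh (2*pi*\<nu>) - 30 * cosh (4*pi*\<nu>) - 2 * cosh (6*pi*\<nu>)"

definition arg_low :: "complex \<Rightarrow> real" where
  "arg_low z = (if Arg z > 0 then Arg z - 2*pi else Arg z)"

definition mu :: "real \<Rightarrow> real" where
  "mu \<nu> = -1/2 + arg_low (complex_of_real (c1 \<nu>) - \<i>/2 * complex_of_real (sqrt (c2 \<nu>))) / (2*pi)"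

text \<open>Common value of the monodromy data p_x1 = p_01 = p_0x.\<close>
definition pp :: "real \<Rightarrow> real" where
  "pp \<nu> = - 2 * cosh (2*pi*\<nu>)"

text \<open>Integration constant d (principal logarithm: y1 only depends on exp(2 i d)).\<close>
definition dconst :: "real \<Rightarrow> complex" where
  "dconst \<nu> = (let m = complex_of_real (mu \<nu>); v = complex_of_real \<nu> in
     \<i>/2 * Ln (
       - (4 * exp (2*\<i> * v * Ln (16::complex)) * Gamma (3/2 - m - \<i> * v)^2 * Gamma (m + 1/2 - \<i> * v)^2)
         / ((2* v + \<i> * (1 - 2*m))^2 * v^2 * complex_of_real (sinh (2*pi*\<nu>))^2 * Gamma (- \<i> * v)^4)
       * complex_of_real (1/2 * (exp (2*pi*\<nu>) * pp \<nu> - pp \<nu>) * sinh (2*pi*\<nu>)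
            + (cos (2*pi*mu \<nu>) + 1) * (exp (2*pi*\<nu>) + 1))))"

definition y1 :: "real \<Rightarrow> complex \<Rightarrow> complex" where
  "y1 \<nu> x = (let m = complex_of_real (mu \<nu>); v = complex_of_real \<nu>; d = dconst \<nu> in
     (2*m - 1 + 2*\<i> * v)^2 / (16* v^2) * exp (-2*\<i> * d) * exp (-2*\<i> * v * Ln x)
     - ((2*m - 1)^2 - 4* v^2) / (8* v^2)
     + (2*m - 1 - 2*\<i> * v)^2 / (16* v^2) * exp (2*\<i> * d) * exp (2*\<i> * v * Ln x))"

definition d1 :: complex where
  "d1 = \<i> * pi/2 - 4 * ln 2 - pi * sqrt 3 / 2"

definition P1 :: "complex \<Rightarrow> complex" where
  "P1 x = - (Ln x + d1 + 2) * (Ln x + d1)"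

end

theory Submission imports Defs "HOL-Real_Asymp.Real_Asymp" begin

lemma ch: "cosh (x::real) = (exp x + exp (-x))/2" "sinh (x::real) = (exp x - exp (-x))/2"
  by (simp_all add: cosh_def sinh_def)

lemma alg:
  fixes E G1 G2 G3 W w2 u S Q :: complex
  assumes "W \<noteq> 0" "w2 \<noteq> 0" "u \<noteq> 0" "S \<noteq> 0" "G3 \<noteq> 0"
  shows "- (4*E*(W*G1)^2*(G2/w2)^2) / ((2*\<i>*W)^2 * u^2 * S^2 * (G3/(-\<i>*u))^4) * (-Q*S^2)
    = E*(G1*G2*inverse (G3^2))^2 * Q * inverse((\<i>*w2/u)^2)"
proof -
  have "(2*\<i>*W)^2 = -4*W^2" by (simp add: power_mult_distrib)
  moreover have "(G3/(-\<i>*u))^4 = G3^4/u^4" by (simp add: power_divide power_mult_distrib)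
  moreover have "(\<i>*w2/u)^2 = - (w2^2/u^2)" by (simp add: power_divide power_mult_distrib)
  ultimately show ?thesis using assms by (simp add: field_simps power2_eq_square eval_nat_numeral)
qed

lemma onecos: "\<bar>1 - cos (x::real)\<bar> \<le> x^2/2"
proof -
  have c: "cos x = 1 - 2 * (sin (x/2))^2" using cos_double_sin[of "x/2"] by simp
  have "\<bar>sin (x/2)\<bar> \<le> \<bar>x/2\<bar>" by (rule abs_sin_x_le_abs_x)
  hence "(sin (x/2))^2 \<le> (x/2)^2"
    by (metis abs_ge_zero power2_abs power_mono)
  thus ?thesis using c by (simp add: power2_eq_square)
qed

lemma nonposI: "Im z \<noteq> 0 \<Longrightarrow> z \<notin> \<int>\<^sub>\<le>\<^sub>0"
  by (auto elim!: nonpos_Ints_cases')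

lemma ev_pos: "eventually (\<lambda>t::real. t > 0) (at_right 0)"
  by (simp add: eventually_at_filter)

lemma c1_lim: "(c1 \<longlongrightarrow> 1) (at_right 0)"
  unfolding c1_def ch by real_asymp

lemma arct_lim: "((\<lambda>t. arctan (sqrt (c2 t) / (2 * c1 t)) / t^2) \<longlongrightarrow>
   (12 * (pi * (pi * (pi * pi)))) powr (1 / 2) / 2) (at_right 0)"
  unfolding c1_def c2_def ch by real_asymp

lemma const_eq: "(12 * (pi * (pi * (pi * pi)))) powr (1 / 2) / 2 = sqrt 3 * pi^2"
proof -
  have "12 * (pi * (pi * (pi * pi))) = (2 * sqrt 3 * pi^2)^2"
    by (simp add: power2_eq_square power_mult_distrib algebra_simps)
  hence "(12 * (pi * (pi * (pi * pi)))) powr (1 / 2) = 2 * sqrt 3 * pi^2"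
    by (simp add: powr_half_sqrt)
  thus ?thesis by simp
qed

lemma lim_ev: assumes "(f \<longlongrightarrow> l) F" "eventually (\<lambda>x. f x = g x) F" "l = m" shows "(g \<longlongrightarrow> m) F"
  using tendsto_cong[OF assms(2)] assms(1,3) by simp

definition eps :: "real \<Rightarrow> real" where "eps t = mu t + 1/2"

lemma eps_ev: "eventually (\<lambda>t. eps t = - arctan (sqrt (c2 t) / (2 * c1 t)) / (2*pi)) (at_right 0)"
proof -
  have "eventually (\<lambda>t. c1 t > 0) (at_right 0)"
    using c1_lim by (rule order_tendstoD) simp
  moreover have "eventually (\<lambda>t. c2 t > 0) (at_right 0)"
    unfolding c2_def ch by real_asymp
  ultimately show ?thesis
  proof eventually_elim
    case (elim t)
    hence elim: "c1 t > 0" and c2p: "c2 t > 0" by auto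
    define z where "z = complex_of_real (c1 t) - \<i>/2 * complex_of_real (sqrt (c2 t))"
    have re: "Re z = c1 t" and im: "Im z = - (sqrt (c2 t) / 2)" by (simp_all add: z_def)
    have "Arg z = arctan (Im z / Re z)" using elim re by (intro arg_conv_arctan) simp
    also have "\<dots> = - arctan (sqrt (c2 t) / (2 * c1 t))" using re im by (simp add: arctan_minus)
    finally have A: "Arg z = - arctan (sqrt (c2 t) / (2 * c1 t))" .
    have "arctan (sqrt (c2 t) / (2 * c1 t)) \<ge> 0" using elim c2p by (simp add: divide_nonneg_pos)
    hence "arg_low z = Arg z" using A by (simp add: arg_low_def)
    thus ?case using A by (simp add: eps_def mu_def z_def)
  qed
qed

lemma eps_lim: "((\<lambda>t. eps t / t^2) \<longlongrightarrow> - (sqrt 3 * pi / 2)) (at_right 0)"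
proof -
  have "((\<lambda>t. - (arctan (sqrt (c2 t) / (2 * c1 t)) / t^2) / (2*pi)) \<longlongrightarrow> - (sqrt 3 * pi^2) / (2*pi)) (at_right 0)"
    using arct_lim unfolding const_eq by (intro tendsto_intros) auto
  also have "- (sqrt 3 * pi^2) / (2*pi) = - (sqrt 3 * pi / 2)" by (simp add: power2_eq_square)
  finally show ?thesis
    by (rule Lim_transform_eventually) (use eps_ev in \<open>eventually_elim, simp\<close>)
qed

lemma eps_lim0: "(eps \<longlongrightarrow> 0) (at_right 0)"
proof -
  have "((\<lambda>t. eps t / t^2 * t^2) \<longlongrightarrow> - (sqrt 3 * pi / 2) * 0^2) (at_right 0)"
    by (intro tendsto_intros eps_lim tendsto_ident_at)
  thus ?thesis
    by (rule lim_ev) (use ev_pos in \<open>eventually_elim, simp\<close>, simp)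
qed

lemma eps_div: "((\<lambda>t. eps t / t) \<longlongrightarrow> 0) (at_right 0)"
proof -
  have "((\<lambda>t. eps t / t^2 * t) \<longlongrightarrow> - (sqrt 3 * pi / 2) * 0) (at_right 0)"
    by (intro tendsto_intros eps_lim tendsto_ident_at)
  thus ?thesis
    by (rule lim_ev) (use ev_pos in \<open>eventually_elim, simp add: power2_eq_square\<close>, simp)
qed

lemma mu_lim: "(mu \<longlongrightarrow> -1/2) (at_right 0)"
proof -
  have "((\<lambda>t. eps t - 1/2) \<longlongrightarrow> 0 - 1/2) (at_right 0)"
    by (intro tendsto_intros eps_lim0)
  moreover have "(\<lambda>t. eps t - 1/2) = mu" by (auto simp: eps_def)
  ultimately show ?thesis by simp
qed

definition good :: "(real \<Rightarrow> complex) \<Rightarrow> complex \<Rightarrow> bool" where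
  "good f a \<longleftrightarrow> ((\<lambda>t. (f t - 1) / complex_of_real t) \<longlongrightarrow> a) (at_right 0)"

lemma ofr_lim: "((\<lambda>t. complex_of_real t) \<longlongrightarrow> 0) (at_right 0)"
  using tendsto_of_real[OF tendsto_ident_at[of "0::real" "{0<..}"]] by simp

lemma good_tendsto:
  assumes "good f a" shows "(f \<longlongrightarrow> 1) (at_right 0)"
proof -
  have "((\<lambda>t. complex_of_real t * ((f t - 1) / complex_of_real t) + 1) \<longlongrightarrow> 0 * a + 1) (at_right 0)"
    using assms unfolding good_def by (intro tendsto_intros ofr_lim)
  thus ?thesis
    by (rule lim_ev) (use ev_pos in \<open>eventually_elim, simp\<close>, simp)
qed

lemma good_cong:
  assumes "good f a" "eventually (\<lambda>t. f t = g t) (at_right 0)" "a = b"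
  shows "good g b"
  using assms unfolding good_def
  by (rule_tac Lim_transform_eventually, auto elim: eventually_mono)

lemma good_mult:
  assumes f: "good f a" and g: "good g b"
  shows "good (\<lambda>t. f t * g t) (a + b)"
proof -
  have "((\<lambda>t. f t * ((g t - 1) / complex_of_real t) + (f t - 1) / complex_of_real t) \<longlongrightarrow> 1 * b + a) (at_right 0)"
    using f g good_tendsto[OF f] unfolding good_def by (intro tendsto_intros)
  moreover have "\<And>t. f t * ((g t - 1) / complex_of_real t) + (f t - 1) / complex_of_real t
       = (f t * g t - 1) / complex_of_real t"
    by (simp add: add_divide_distrib[symmetric] algebra_simps)
  ultimately show ?thesis unfolding good_def by (simp add: add.commute)
qed

lemma good_inverse:
  assumes f: "good f a"
  shows "good (\<lambda>t. inverse (f t)) (- a)"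
proof -
  have "((\<lambda>t. - ((f t - 1) / complex_of_real t) * inverse (f t)) \<longlongrightarrow> - a * inverse 1) (at_right 0)"
    using f good_tendsto[OF f] unfolding good_def by (intro tendsto_intros) auto
  moreover have "eventually (\<lambda>t. f t \<noteq> 0) (at_right 0)"
    using tendsto_imp_eventually_ne[OF good_tendsto[OF f]] by simp
  ultimately show ?thesis unfolding good_def
    by (rule_tac lim_ev) (auto elim!: eventually_mono simp: field_simps minus_divide_left)
qed

lemma good_comp:
  assumes h: "(h has_field_derivative h') (at 0)" "h 0 = 1"
    and w: "((\<lambda>t. w t / complex_of_real t) \<longlongrightarrow> c) (at_right 0)"
  shows "good (\<lambda>t. h (w t)) (h' * c)"
proof -
  define q where "q z = (if z = 0 then h' else (h z - 1) / z)" for z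
  have "((\<lambda>y. (h y - h 0) / (y - 0)) \<longlongrightarrow> h') (at 0)"
    using h(1) by (simp add: has_field_derivative_iff)
  hence "(q \<longlongrightarrow> h') (at 0)"
    by (rule Lim_transform_eventually) (auto simp: eventually_at_filter q_def h(2))
  hence qc: "isCont q 0" by (simp add: isCont_def q_def)
  have "((\<lambda>t. complex_of_real t * (w t / complex_of_real t)) \<longlongrightarrow> 0 * c) (at_right 0)"
    by (intro tendsto_intros ofr_lim w)
  hence w0: "(w \<longlongrightarrow> 0) (at_right 0)"
    by (rule lim_ev) (use ev_pos in \<open>eventually_elim, simp\<close>, simp)
  have L: "((\<lambda>t. q (w t) * (w t / complex_of_real t)) \<longlongrightarrow> q 0 * c) (at_right 0)"
    by (intro tendsto_intros isCont_tendsto_compose[OF qc w0] w)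
  have E: "\<And>t. q (w t) * (w t / complex_of_real t) = (h (w t) - 1) / complex_of_real t"
    by (auto simp: q_def h(2))
  show ?thesis unfolding good_def by (rule lim_ev[OF L]) (simp_all only: E, simp_all add: q_def h(2))
qed

lemma good_real:
  assumes "((\<lambda>t. (g t - 1) / t) \<longlongrightarrow> a) (at_right 0)"
  shows "good (\<lambda>t. complex_of_real (g t)) (complex_of_real a)"
  unfolding good_def by (rule lim_ev[OF tendsto_of_real[OF assms]]) auto


lemma good_pow2: "good f a \<Longrightarrow> good (\<lambda>t. (f t)^2) (a + a)"
  using good_mult[of f a f a] by (simp add: power2_eq_square)

definition Bf :: "real \<Rightarrow> real" where
  "Bf t = 1/2 * (exp (2*pi*t) * pp t - pp t) * sinh (2*pi*t) + (cos (2*pi*mu t) + 1) * (exp (2*pi*t) + 1)"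
definition Qr :: "real \<Rightarrow> real" where
  "Qr t = - Bf t / (sinh (2*pi*t))^2"

lemma Q0_lim: "((\<lambda>t. ((exp (2*pi*t) - 1) * cosh (2*pi*t) / sinh (2*pi*(t::real)) - 1)/t) \<longlongrightarrow> pi) (at_right 0)"
  by real_asymp

lemma Q1_lim: "((\<lambda>t. (- (1/2 * (exp (2*pi*t) * pp t - pp t) * sinh (2*pi*t)) / (sinh (2*pi*t))^2 - 1) / t) \<longlongrightarrow> pi) (at_right 0)"
proof (rule lim_ev[OF Q0_lim])
  show "\<forall>\<^sub>F t in at_right 0. ((exp (2*pi*t) - 1) * cosh (2*pi*t) / sinh (2*pi*(t::real)) - 1)/t =
     (- (1/2 * (exp (2*pi*t) * pp t - pp t) * sinh (2*pi*t)) / (sinh (2*pi*t))^2 - 1) / t"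
    using ev_pos
  proof eventually_elim
    case (elim t)
    hence "sinh (2*pi*t) \<noteq> 0" by (simp add: sinh_zero_iff)
    thus ?case by (simp add: pp_def field_simps power2_eq_square)
  qed
qed simp

lemma Q3_lim: "((\<lambda>t. t^3 * (exp (2*pi*t) + 1) / (sinh (2*pi*t))^2) \<longlongrightarrow> 0) (at_right 0)"
  unfolding ch by real_asymp

lemma Q2_lim: "((\<lambda>t. (cos (2*pi*mu t) + 1) * (exp (2*pi*t) + 1) / (sinh (2*pi*t))^2 / t) \<longlongrightarrow> 0) (at_right 0)"
proof (rule Lim_null_comparison)
  let ?g = "\<lambda>t. 2*pi^2*(eps t / t^2)^2 * (t^3 * (exp (2*pi*t) + 1) / (sinh (2*pi*t))^2)"
  have "(?g \<longlongrightarrow> 2*pi^2*(- (sqrt 3 * pi / 2))^2 * 0) (at_right 0)"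
    by (intro tendsto_intros eps_lim Q3_lim)
  thus "(?g \<longlongrightarrow> 0) (at_right 0)" by simp
  show "\<forall>\<^sub>F t in at_right 0. norm ((cos (2*pi*mu t) + 1) * (exp (2*pi*t) + 1) / (sinh (2*pi*t))^2 / t) \<le> ?g t"
    using ev_pos
  proof eventually_elim
    case (elim t)
    have "2*pi*mu t = 2*pi*eps t - pi" by (simp add: eps_def algebra_simps)
    hence cm: "cos (2*pi*mu t) + 1 = 1 - cos (2*pi*eps t)" by (simp add: cos_diff)
    define K where "K = (exp (2*pi*t) + 1) / (sinh (2*pi*t))^2 / t"
    have K0: "K \<ge> 0" using elim unfolding K_def by (intro divide_nonneg_pos divide_nonneg_nonneg) (auto simp: add_pos_pos)
    have b: "\<bar>1 - cos (2*pi*eps t)\<bar> \<le> 2*pi^2*(eps t)^2"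
      using onecos[of "2*pi*eps t"] by (simp add: power2_eq_square)
    have "norm ((cos (2*pi*mu t) + 1) * (exp (2*pi*t) + 1) / (sinh (2*pi*t))^2 / t)
        = \<bar>1 - cos (2*pi*eps t)\<bar> * K" using K0 elim by (simp add: cm K_def abs_mult)
    also have "\<dots> \<le> 2*pi^2*(eps t)^2 * K" using b K0 by (rule mult_right_mono)
    also have "\<dots> = ?g t" using elim by (simp add: K_def field_simps power2_eq_square eval_nat_numeral)
    finally show ?case .
  qed
qed

lemma Q_good: "good (\<lambda>t. complex_of_real (Qr t)) (complex_of_real pi)"
proof (rule good_real)
  have "((\<lambda>t. (- (1/2 * (exp (2*pi*t) * pp t - pp t) * sinh (2*pi*t)) / (sinh (2*pi*t))^2 - 1) / t
       - (cos (2*pi*mu t) + 1) * (exp (2*pi*t) + 1) / (sinh (2*pi*t))^2 / t) \<longlongrightarrow> pi - 0) (at_right 0)"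
    by (intro tendsto_intros Q1_lim Q2_lim)
  moreover have "\<And>t. (- (1/2 * (exp (2*pi*t) * pp t - pp t) * sinh (2*pi*t)) / (sinh (2*pi*t))^2 - 1) / t
       - (cos (2*pi*mu t) + 1) * (exp (2*pi*t) + 1) / (sinh (2*pi*t))^2 / t = (Qr t - 1) / t"
    by (simp add: Qr_def Bf_def diff_divide_distrib add_divide_distrib)
  ultimately show "((\<lambda>t. (Qr t - 1) / t) \<longlongrightarrow> pi) (at_right 0)" by simp
qed

lemma D_good: "good (\<lambda>t. 1 + \<i> * complex_of_real (eps t / t)) (\<i> * complex_of_real (- (sqrt 3 * pi / 2)))"
  unfolding good_def
proof (rule lim_ev)
  show "((\<lambda>t. \<i> * complex_of_real (eps t / t^2)) \<longlongrightarrow> \<i> * complex_of_real (- (sqrt 3 * pi / 2))) (at_right 0)"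
    by (intro tendsto_intros eps_lim)
  show "\<forall>\<^sub>F t in at_right 0. \<i> * complex_of_real (eps t / t^2) = (1 + \<i> * complex_of_real (eps t / t) - 1) / complex_of_real t"
    by (simp add: power2_eq_square)
qed simp

lemma hG: "((\<lambda>z. Gamma (1 + z)) has_field_derivative Gamma 1 * Digamma 1) (at 0)"
  by (auto intro!: derivative_eq_intros)


definition w1 :: "real \<Rightarrow> complex" where "w1 t = - complex_of_real (eps t) - \<i> * complex_of_real t"
definition w2 :: "real \<Rightarrow> complex" where "w2 t = complex_of_real (eps t) - \<i> * complex_of_real t"
definition w3 :: "real \<Rightarrow> complex" where "w3 t = - \<i> * complex_of_real t"

lemma wlim:
  assumes "\<And>t. w t = complex_of_real (s * eps t) - \<i> * complex_of_real t"
  shows "((\<lambda>t. w t / complex_of_real t) \<longlongrightarrow> - \<i>) (at_right 0)"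
proof (rule lim_ev)
  show "((\<lambda>t. complex_of_real (s * (eps t / t)) - \<i>) \<longlongrightarrow> complex_of_real (s * 0) - \<i>) (at_right 0)"
    by (intro tendsto_intros eps_div)
  show "\<forall>\<^sub>F t in at_right 0. complex_of_real (s * (eps t / t)) - \<i> = w t / complex_of_real t"
    using ev_pos by eventually_elim (simp add: assms field_simps)
qed simp

lemma G_good:
  assumes "\<And>t. w t = complex_of_real (s * eps t) - \<i> * complex_of_real t"
  shows "good (\<lambda>t. Gamma (1 + w t)) (Gamma 1 * Digamma 1 * - \<i>)"
  by (rule good_comp[OF hG _ wlim[OF assms]]) simp

definition F where "F t = Gamma (1 + w1 t) * Gamma (1 + w2 t) * inverse ((Gamma (1 + w3 t))^2)"

lemma F_good: "good F 0"
proof -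
  have a: "good (\<lambda>t. Gamma (1 + w1 t)) (Gamma 1 * Digamma 1 * - \<i>)"
    by (rule G_good[of _ "-1"]) (simp add: w1_def)
  have b: "good (\<lambda>t. Gamma (1 + w2 t)) (Gamma 1 * Digamma 1 * - \<i>)"
    by (rule G_good[of _ "1"]) (simp add: w2_def)
  have c: "good (\<lambda>t. Gamma (1 + w3 t)) (Gamma 1 * Digamma 1 * - \<i>)"
    by (rule G_good[of _ "0"]) (simp add: w3_def)
  show ?thesis
    using good_mult[OF good_mult[OF a b] good_inverse[OF good_pow2[OF c]]]
    unfolding F_def by (rule good_cong) auto
qed

definition E0 where "E0 t = exp (2*\<i> * complex_of_real t * Ln (16::complex))"

lemma E0_good: "good E0 (2 * \<i> * Ln 16)"
proof -
  have "good (\<lambda>t. exp (2*\<i> * complex_of_real t * Ln (16::complex))) (1 * (2 * \<i> * Ln 16))"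
  proof (rule good_comp[where h=exp and w="\<lambda>t. 2*\<i> * complex_of_real t * Ln (16::complex)"])
    show "(exp has_field_derivative 1) (at 0)" using DERIV_exp[of 0] by simp
    show "((\<lambda>t. 2*\<i> * complex_of_real t * Ln (16::complex) / complex_of_real t) \<longlongrightarrow> 2 * \<i> * Ln 16) (at_right 0)"
      by (rule lim_ev[OF tendsto_const]) (use ev_pos in \<open>eventually_elim, simp\<close>, simp)
  qed simp
  thus ?thesis unfolding E0_def by simp
qed

definition Zf :: "real \<Rightarrow> complex" where
  "Zf t = (let m = complex_of_real (mu t); v = complex_of_real t in
       - (4 * exp (2*\<i> * v * Ln (16::complex)) * Gamma (3/2 - m - \<i> * v)^2 * Gamma (m + 1/2 - \<i> * v)^2)
         / ((2* v + \<i> * (1 - 2*m))^2 * v^2 * complex_of_real (sinh (2*pi*t))^2 * Gamma (- \<i> * v)^4)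
       * complex_of_real (1/2 * (exp (2*pi*t) * pp t - pp t) * sinh (2*pi*t)
            + (cos (2*pi*mu t) + 1) * (exp (2*pi*t) + 1)))"

lemma dconst_eq: "dconst t = \<i>/2 * Ln (Zf t)"
  by (simp add: dconst_def Zf_def Let_def)

lemma Zf_eq:
  assumes t: "t > 0"
  shows "Zf t = E0 t * (F t)^2 * complex_of_real (Qr t) * inverse ((1 + \<i> * complex_of_real (eps t / t))^2)"
proof -
  define u where "u = complex_of_real t"
  define S where "S = complex_of_real (sinh (2*pi*t))"
  have u0: "u \<noteq> 0" using t by (simp add: u_def)
  have S0: "S \<noteq> 0" using t by (simp add: S_def sinh_zero_iff)
  have mu: "complex_of_real (mu t) = complex_of_real (eps t) - 1/2" by (simp add: eps_def)
  have W0: "1 + w1 t \<notin> \<int>\<^sub>\<le>\<^sub>0" using t by (intro nonposI) (simp add: w1_def)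
  hence W0': "1 + w1 t \<noteq> 0" by auto
  have w20: "w2 t \<noteq> 0" using t by (auto simp: w2_def complex_eq_iff)
  have w2n: "w2 t \<notin> \<int>\<^sub>\<le>\<^sub>0" using t by (intro nonposI) (simp add: w2_def)
  have w3n: "w3 t \<notin> \<int>\<^sub>\<le>\<^sub>0" using t by (intro nonposI) (simp add: w3_def)
  have G30: "Gamma (1 + w3 t) \<noteq> 0" using t by (simp add: Gamma_eq_zero_iff nonposI w3_def)
  have g1: "Gamma (3/2 - complex_of_real (mu t) - \<i> * u) = (1 + w1 t) * Gamma (1 + w1 t)"
  proof -
    have "3/2 - complex_of_real (mu t) - \<i> * u = (1 + w1 t) + 1" by (simp add: mu w1_def u_def)
    thus ?thesis using Gamma_plus1[OF W0] by simp
  qed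
  have g2: "Gamma (complex_of_real (mu t) + 1/2 - \<i> * u) = Gamma (1 + w2 t) / w2 t"
  proof -
    have "complex_of_real (mu t) + 1/2 - \<i> * u = w2 t" by (simp add: mu w2_def u_def)
    thus ?thesis using Gamma_plus1[OF w2n] w20 by (simp add: add.commute)
  qed
  have g3: "Gamma (- \<i> * u) = Gamma (1 + w3 t) / (- \<i> * u)"
  proof -
    have "- \<i> * u = w3 t" by (simp add: w3_def u_def)
    moreover have "w3 t \<noteq> 0" using u0 by (simp add: w3_def u_def)
    ultimately show ?thesis using Gamma_plus1[OF w3n] by (simp add: add.commute)
  qed
  have lin: "2 * u + \<i> * (1 - 2 * complex_of_real (mu t)) = 2 * \<i> * (1 + w1 t)"
    by (simp add: mu w1_def u_def algebra_simps)
  have B: "complex_of_real (1/2 * (exp (2*pi*t) * pp t - pp t) * sinh (2*pi*t)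
            + (cos (2*pi*mu t) + 1) * (exp (2*pi*t) + 1)) = - complex_of_real (Qr t) * S^2"
    using S0 by (simp add: Qr_def Bf_def S_def field_simps)
  have D: "1 + \<i> * complex_of_real (eps t / t) = \<i> * w2 t / u"
    using u0 by (simp add: w2_def u_def field_simps)
  have "Zf t = - (4 * E0 t * ((1 + w1 t) * Gamma (1 + w1 t))^2 * (Gamma (1 + w2 t) / w2 t)^2)
         / ((2 * \<i> * (1 + w1 t))^2 * u^2 * S^2 * (Gamma (1 + w3 t) / (- \<i> * u))^4)
       * (- complex_of_real (Qr t) * S^2)"
    unfolding Zf_def Let_def u_def[symmetric] S_def[symmetric] g1 g2 g3 lin B
    by (simp add: E0_def u_def)
  also have "\<dots> = E0 t * (F t)^2 * complex_of_real (Qr t) * inverse ((\<i> * w2 t / u)^2)"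
    unfolding F_def by (rule alg[OF W0' w20 u0 S0 G30])
  finally show ?thesis unfolding D .
qed


definition aZ :: complex where
  "aZ = ((2 * \<i> * Ln 16 + (0 + 0)) + complex_of_real pi) + - (\<i> * complex_of_real (- (sqrt 3 * pi / 2)) + \<i> * complex_of_real (- (sqrt 3 * pi / 2)))"

lemma Z_good: "good Zf aZ"
proof -
  have "good (\<lambda>t. E0 t * (F t)^2 * complex_of_real (Qr t) * inverse ((1 + \<i> * complex_of_real (eps t / t))^2)) aZ"
    unfolding aZ_def
    by (intro good_mult good_inverse good_pow2 E0_good F_good Q_good D_good)
  thus ?thesis
    by (rule good_cong) (use ev_pos in \<open>eventually_elim, simp add: Zf_eq\<close>, simp)
qed

lemma Zf_ne: "eventually (\<lambda>t. Zf t \<noteq> 0) (at_right 0)"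
  using tendsto_imp_eventually_ne[OF good_tendsto[OF Z_good]] by simp

lemma alg2:
  fixes Z X m u :: complex
  assumes "Z \<noteq> 0" "X \<noteq> 0" "u \<noteq> 0"
  shows "(2*m - 1 + 2*\<i>*u)^2 / (16*u^2) * Z * X - ((2*m - 1)^2 - 4*u^2)/(8*u^2)
      + (2*m - 1 - 2*\<i>*u)^2/(16*u^2) * inverse Z * inverse X
    = 1 + (((2*m - 1 + 2*\<i>*u) * (Z*X) - (2*m - 1 - 2*\<i>*u))/u)^2/(16*(Z*X))"
  using assms by (simp add: field_simps power2_eq_square)

lemma y1_eq:
  assumes t: "t > 0" and Z: "Zf t \<noteq> 0"
  shows "y1 t x = 1 + (((2 * complex_of_real (mu t) - 1 + 2*\<i> * complex_of_real t) * (Zf t * exp (-2*\<i> * complex_of_real t * Ln x))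
      - (2 * complex_of_real (mu t) - 1 - 2*\<i> * complex_of_real t)) / complex_of_real t)^2 / (16 * (Zf t * exp (-2*\<i> * complex_of_real t * Ln x)))"
proof -
  have e1: "exp (-2*\<i> * dconst t) = Zf t"
  proof -
    have "-2*\<i> * dconst t = Ln (Zf t)" by (simp add: dconst_eq)
    thus ?thesis using Z by (simp add: exp_Ln)
  qed
  have e2: "exp (2*\<i> * dconst t) = inverse (Zf t)"
  proof -
    have "2*\<i> * dconst t = - Ln (Zf t)" by (simp add: dconst_eq)
    thus ?thesis using Z by (simp add: exp_minus exp_Ln)
  qed
  have e3: "exp (2*\<i> * complex_of_real t * Ln x) = inverse (exp (-2*\<i> * complex_of_real t * Ln x))"
    by (simp add: exp_minus[symmetric])
  show ?thesis
    unfolding y1_def Let_def e1 e2 e3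
    using alg2[OF Z exp_not_eq_zero, of "complex_of_real t" "complex_of_real (mu t)" "-2*\<i> * complex_of_real t * Ln x"] t
    by (simp add: mult.assoc)
qed

lemma y1_lim: "((\<lambda>t. y1 t x) \<longlongrightarrow> P1 x) (at_right 0)"
proof -
  define Ef where "Ef t = Zf t * exp (-2*\<i> * complex_of_real t * Ln x)" for t
  define aE where "aE = aZ + 1 * (-2*\<i> * Ln x)"
  have EG: "good Ef aE" unfolding Ef_def aE_def
  proof (rule good_mult[OF Z_good])
    show "good (\<lambda>t. exp (-2*\<i> * complex_of_real t * Ln x)) (1 * (-2*\<i> * Ln x))"
    proof (rule good_comp[where h=exp and w="\<lambda>t. -2*\<i> * complex_of_real t * Ln x"])
      show "(exp has_field_derivative 1) (at 0)" using DERIV_exp[of 0] by simp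
      show "((\<lambda>t. -2*\<i> * complex_of_real t * Ln x / complex_of_real t) \<longlongrightarrow> -2*\<i> * Ln x) (at_right 0)"
        by (rule lim_ev[OF tendsto_const]) (use ev_pos in \<open>eventually_elim, simp\<close>, simp)
    qed simp
  qed
  define p where "p t = 2 * complex_of_real (mu t) - 1 + 2*\<i> * complex_of_real t" for t
  have pl: "(p \<longlongrightarrow> 2 * complex_of_real (-1/2) - 1 + 2*\<i> * 0) (at_right 0)"
    unfolding p_def by (intro tendsto_intros mu_lim ofr_lim)
  have lim: "((\<lambda>t. 1 + (p t * ((Ef t - 1) / complex_of_real t) + 4 * \<i>)^2 / (16 * Ef t))
      \<longlongrightarrow> 1 + ((2 * complex_of_real (-1/2) - 1 + 2*\<i> * 0) * aE + 4 * \<i>)^2 / (16 * 1)) (at_right 0)"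
    using EG good_tendsto[OF EG] pl unfolding good_def by (intro tendsto_intros) auto
  have fin: "1 + ((2 * complex_of_real (-1/2) - 1 + 2*\<i> * 0) * aE + 4 * \<i>)^2 / (16 * 1) = P1 x"
  proof -
    have "ln (16::real) = 4 * ln 2" using ln_realpow[of 2 4] by simp
    hence L16: "Ln (16::complex) = 4 * Ln 2"
      using Ln_of_real[of 16] Ln_of_real[of 2] by simp
    have aZe: "aZ = -2 * \<i> * d1" unfolding aZ_def d1_def L16
      by (simp add: algebra_simps)
    have "\<And>D L. 1 + ((2 * complex_of_real (-1/2) - 1 + 2*\<i> * 0) * (-2 * \<i> * D + 1 * (-2*\<i> * L)) + 4 * \<i>)^2 / (16 * 1)
       = - (L + D + 2) * (L + D)"
      by (simp add: field_simps power2_eq_square)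
    thus ?thesis unfolding aE_def aZe P1_def by simp
  qed
  show ?thesis
  proof (rule lim_ev[OF lim])
    show "\<forall>\<^sub>F t in at_right 0. 1 + (p t * ((Ef t - 1) / complex_of_real t) + 4 * \<i>)^2 / (16 * Ef t) = y1 t x"
      using ev_pos Zf_ne
    proof eventually_elim
      case (elim t)
      have "p t * ((Ef t - 1) / complex_of_real t) + 4 * \<i> =
        (p t * Ef t - (2 * complex_of_real (mu t) - 1 - 2*\<i> * complex_of_real t)) / complex_of_real t"
        using elim by (simp add: p_def field_simps)
      thus ?case using y1_eq[OF elim] by (simp add: Ef_def p_def)
    qed
  qed (rule fin)
qed

theorem proposition13:
  shows "(mu \<longlongrightarrow> -1/2) (at_right 0) \<and>
    (\<forall>x::complex. x \<noteq> 0 \<and> \<bar>Arg x\<bar> < pi \<longrightarrow>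
       ((\<lambda>\<nu>. y1 \<nu> x) \<longlongrightarrow> P1 x) (at_right 0))"
  using mu_lim y1_lim by blast

end
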